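(* Let $d\ge 1$. Let $\mathbf{s}\in\mathbb{R}^d$ be a latent source vector and $\mathbf{u}$ an auxiliary variable, and suppose the conditional density of $\mathbf{s}$ given $\mathbf{u}$ is the contaminated density $$p(\mathbf{s}|\mathbf{u})=(1-\epsilon(\mathbf{u}))\,p^{\star}(\mathbf{s}|\mathbf{u})+\epsilon(\mathbf{u})\,\delta(\mathbf{s}|\mathbf{u}),\qquad \epsilon(\mathbf{u})\in[0,1),$$ where $p^{\star}$ is the target density and $\delta$ the outlier density. Assume: (A1) the data are $\mathbf{x}=\mathbf{f}(\mathbf{s})$ with $\mathbf{f}:\mathbb{R}^d\to\mathbb{R}^d$ smooth and invertible; (A2) $p^{\star}(\mathbf{s}|\mathbf{u})$ is conditionally independent and belongs to the exponential family $$\log p^{\star}(\mathbf{s}|\mathbf{u})=\sum_{j=1}^{d}\lambda_j(\mathbf{u})q_j(s_j)+\lambda_0(\mathbf{u})-\log Z(\boldsymbol{\lambda}(\mathbf{u})),$$ with scalar functions $q_j$, parameters $\lambda_j(\mathbf{u})$ and partition function $Z$; (A3) for all $\mathbf{s},\mathbf{u}$ the ratio $\delta(\mathbf{s}|\mathbf{u})/p^{\star}(\mathbf{s}|\mathbf{u})$ is finite; (A4) (in the limit of infinite data) the conditional density $p(\mathbf{x}|\mathbf{u})$ of $\mathbf{x}$ given $\mathbf{u}$ satisfies $$\log\frac{p(\mathbf{x}|\mathbf{u})}{c(\mathbf{x})e(\mathbf{u})}=\mathbf{w}(\mathbf{u})^{\top}\mathbf{h}(\mathbf{x})$$ for some vector-valued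 functions $\mathbf{w}(\mathbf{u})=(w_1(\mathbf{u}),\dots,w_d(\mathbf{u}))^\top$, $\mathbf{h}(\mathbf{x})=(h_1(\mathbf{x}),\dots,h_d(\mathbf{x}))^\top$ and scalar functions $c,e$; (A5) there exist $m+1$ points $\mathbf{u}_0,\mathbf{u}_1,\dots,\mathbf{u}_m$ such that the $d\times d$ matrices $\bar{\boldsymbol{\Lambda}}:=\sum_{i=1}^m\bar{\boldsymbol{\lambda}}(\mathbf{u}_i)\bar{\boldsymbol{\lambda}}(\mathbf{u}_i)^{\top}$ and $\sum_{i=1}^m\bar{\mathbf{w}}(\mathbf{u}_i)\bar{\boldsymbol{\lambda}}(\mathbf{u}_i)^{\top}$ are invertible, where $\bar{\boldsymbol{\lambda}}(\mathbf{u}):=\boldsymbol{\lambda}(\mathbf{u})-\boldsymbol{\lambda}(\mathbf{u}_0)$ and $\bar{\mathbf{w}}(\mathbf{u}):=\mathbf{w}(\mathbf{u})-\mathbf{w}(\mathbf{u}_0)$. Then, for $\epsilon(\mathbf{u})$ sufficiently small for all $\mathbf{u}$ (in the limit of infinite data), there exist an invertible $d\times d$ matrix $\mathbf{A}$ and a vector $\boldsymbol{\alpha}\in\mathbb{R}^d$ such that $$\mathbf{q}(\mathbf{s})+\mathbf{r}(\mathbf{s})=\mathbf{A}\mathbf{h}(\mathbf{x})+\boldsymbol{\alpha},$$ where $\mathbf{q}(\mathbf{s})=(q_1(s_1),\dots,q_d(s_d))^\top$ and, with $\bar{\boldsymbol{\omega}}(\mathbf{u}):=\bar{\boldsymbol{\Lambda}}^{-1}\bar{\boldsymbol{\lambda}}(\mathbf{u})$,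 $\mathbf{1}_d=(1,\dots,1)^\top$ and $\epsilon_{\max}:=\max_{i=0,1,\dots,m}\epsilon(\mathbf{u}_i)$, $$\mathbf{r}(\mathbf{s})=\sum_{i=1}^m\left\{\epsilon(\mathbf{u}_i)\frac{\delta(\mathbf{s}|\mathbf{u}_i)}{p^{\star}(\mathbf{s}|\mathbf{u}_i)}-\epsilon(\mathbf{u}_0)\frac{\delta(\mathbf{s}|\mathbf{u}_0)}{p^{\star}(\mathbf{s}|\mathbf{u}_0)}\right\}\bar{\boldsymbol{\omega}}(\mathbf{u}_i)+O(\epsilon_{\max}^2)\mathbf{1}_d .$$
   Context: This is a nonlinear ICA setting: observations $\mathbf{x}$ arise as an invertible nonlinear mixture of sources $\mathbf{s}$, and an auxiliary variable $\mathbf{u}$ (e.g. a time-segment label or past observation) is observed alongside $\mathbf{x}$. The conditional density $p(\mathbf{x}|\mathbf{u})$ is the one induced from the contaminated source density $p(\mathbf{s}|\mathbf{u})$ via $\mathbf{x}=\mathbf{f}(\mathbf{s})$. $O(\epsilon_{\max}^2)$ denotes a term bounded by a constant times $\epsilon_{\max}^2$ as $\epsilon_{\max}\to 0$. *)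

theory Defs
  imports "HOL-Analysis.Analysis" "HOL-Library.Landau_Symbols"
begin

fun Ck_map :: "nat \<Rightarrow> (real^'n \<Rightarrow> real^'m) \<Rightarrow> bool" where
  "Ck_map 0 f = continuous_on UNIV f"
| "Ck_map (Suc k) f = (f differentiable_on UNIV \<and>
      (\<forall>v. Ck_map k (\<lambda>x. frechet_derivative f (at x) v)))"

definition smooth_map :: "(real^'n \<Rightarrow> real^'m) \<Rightarrow> bool" where
  "smooth_map f \<longleftrightarrow> (\<forall>k. Ck_map k f)"

definition smooth_invertible :: "(real^'n \<Rightarrow> real^'n) \<Rightarrow> bool" where
  "smooth_invertible f \<longleftrightarrow> bij f \<and> smooth_map f \<and> smooth_map (inv f)"

definition is_density :: "(real^'n \<Rightarrow> real) \<Rightarrow> bool" where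
  "is_density p \<longleftrightarrow> (\<forall>s. 0 \<le> p s) \<and> (p has_integral 1) UNIV"

definition induced_density :: "(real^'n \<Rightarrow> real^'n) \<Rightarrow> (real^'n \<Rightarrow> real) \<Rightarrow> real^'n \<Rightarrow> real" where
  "induced_density f ps x =
     ps (inv f x) * \<bar>det (matrix (frechet_derivative (inv f) (at x)))\<bar>"

definition outer :: "real^'n \<Rightarrow> real^'n \<Rightarrow> real^'n^'n" where
  "outer a b = (\<chi> i j. a $ i * b $ j)"

end

theory Submission
  imports Defs
begin

lemma outer_mv: "outer a b *v v = (b \<bullet> v) *\<^sub>R a"
  by (simp add: outer_def vec_eq_iff matrix_vector_mult_def inner_vec_def sum_distrib_left mult_ac)
lemma sum_mv: "sum M I *v (v::real^'n) = (\<Sum>i\<in>I. M i *v v)"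
  by (induction I rule: infinite_finite_induct) (auto simp: matrix_vector_mult_add_rdistrib)
lemma mv_sum: "(M::real^'n^'m) *v (\<Sum>i\<in>I. c i *\<^sub>R v i) = (\<Sum>i\<in>I. c i *\<^sub>R (M *v v i))"
  by (induction I rule: infinite_finite_induct) (auto simp: matrix_vector_right_distrib matrix_vector_mult_scaleR)
lemma phi_bound: "\<bar>x\<bar> \<le> 1/2 \<Longrightarrow> \<bar>ln (1 + x) - x\<bar> \<le> 2 * x\<^sup>2" for x::real
  using abs_ln_one_plus_x_minus_x_bound_nonneg[of x] abs_ln_one_plus_x_minus_x_bound_nonpos[of x]
  by (cases "x \<ge> 0") (auto simp: power2_eq_square)
lemma matrix_inv_left': "invertible A \<Longrightarrow> matrix_inv A ** A = mat 1"
  unfolding invertible_def matrix_inv_def by (rule someI2_ex) auto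
lemma transpose_sum': "transpose (sum M I) = (\<Sum>i\<in>I. transpose (M i :: real^'n^'m))"
  by (simp add: transpose_def vec_eq_iff sum_component)
lemma outer_transpose: "transpose (outer a b) = outer b a"
  by (simp add: outer_def transpose_def vec_eq_iff)

theorem theorem1:
  fixes f :: "real^'d \<Rightarrow> real^'d"
    and pstar \<delta> :: "'u \<Rightarrow> real^'d \<Rightarrow> real"
    and lam :: "'u \<Rightarrow> real^'d" and lam0 :: "'u \<Rightarrow> real" and Z :: "real^'d \<Rightarrow> real"
    and q :: "'d \<Rightarrow> real \<Rightarrow> real"
    and F :: "'t filter"
    and \<epsilon> :: "'t \<Rightarrow> 'u \<Rightarrow> real"
    and w :: "'t \<Rightarrow> 'u \<Rightarrow> real^'d" and h :: "'t \<Rightarrow> real^'d \<Rightarrow> real^'d"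
    and c :: "'t \<Rightarrow> real^'d \<Rightarrow> real" and e :: "'t \<Rightarrow> 'u \<Rightarrow> real"
    and uu :: "nat \<Rightarrow> 'u" and m :: nat
  assumes eps_range: "\<And>t u. 0 \<le> \<epsilon> t u \<and> \<epsilon> t u < 1"
    and eps_small: "\<And>i. i \<le> m \<Longrightarrow> ((\<lambda>t. \<epsilon> t (uu i)) \<longlongrightarrow> 0) F"
    and pstar_dens: "\<And>u. is_density (pstar u)"
    and delta_dens: "\<And>u. is_density (\<delta> u)"
    and A1: "smooth_invertible f"
    and A2: "\<And>u s. pstar u s > 0 \<and>
               ln (pstar u s) = (\<Sum>j\<in>UNIV. lam u $ j * q j (s $ j)) + lam0 u - ln (Z (lam u))"
    and A4: "\<And>t u x.
               induced_density f (\<lambda>s. (1 - \<epsilon> t u) * pstar u s + \<epsilon> t u * \<delta> u s) x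
                 / (c t x * e t u) > 0 \<and>
               ln (induced_density f (\<lambda>s. (1 - \<epsilon> t u) * pstar u s + \<epsilon> t u * \<delta> u s) x
                 / (c t x * e t u)) = w t u \<bullet> h t x"
    and A5a: "invertible (\<Sum>i=1..m. outer (lam (uu i) - lam (uu 0)) (lam (uu i) - lam (uu 0)))"
    and A5b: "\<And>t. invertible
               (\<Sum>i=1..m. outer (w t (uu i) - w t (uu 0)) (lam (uu i) - lam (uu 0)))"
  shows "\<exists>(A :: 't \<Rightarrow> real^'d^'d) (\<alpha> :: 't \<Rightarrow> real^'d).
           (\<forall>t. invertible (A t)) \<and>
           (\<forall>s j. (\<lambda>t. ((\<chi> k. q k (s $ k))
                       + (\<Sum>i=1..m.
                           (\<epsilon> t (uu i) * (\<delta> (uu i) s / pstar (uu i) s)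
                            - \<epsilon> t (uu 0) * (\<delta> (uu 0) s / pstar (uu 0) s))
                           *\<^sub>R (matrix_inv (\<Sum>l=1..m. outer (lam (uu l) - lam (uu 0))
                                                       (lam (uu l) - lam (uu 0)))
                                 *v (lam (uu i) - lam (uu 0))))
                       - (A t *v h t (f s) + \<alpha> t)) $ j)
                 \<in> O[F](\<lambda>t. (Max ((\<lambda>i. \<epsilon> t (uu i)) ` {0..m}))\<^sup>2))"
proof -
  define lb where "lb i = lam (uu i) - lam (uu 0)" for i
  define wb where "wb t i = w t (uu i) - w t (uu 0)" for t i
  define L where "L = (\<Sum>i=1..m. outer (lb i) (lb i))"
  define Li where "Li = matrix_inv L"
  define B where "B t = (\<Sum>i=1..m. outer (lb i) (wb t i))" for t
  define Q where "Q s = (\<chi> k. q k (s $ k))" for s :: "real^'d"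
  define \<rho> where "\<rho> i s = \<delta> (uu i) s / pstar (uu i) s" for i s
  define a where "a t i s = \<epsilon> t (uu i) * (\<rho> i s - 1)" for t i s
  define \<phi> where "\<phi> x = ln (1 + x) - x" for x :: real
  define cc where "cc i = lam0 (uu i) - ln (Z (lam (uu i)))" for i
  define K where "K t i = - ln (e t (uu 0) / e t (uu i)) - cc i + cc 0" for t i
  define A where "A t = Li ** B t" for t
  define \<alpha> where "\<alpha> t = Li *v (\<Sum>i=1..m. K t i *\<^sub>R lb i)
       + (\<Sum>i=1..m. (\<epsilon> t (uu i) - \<epsilon> t (uu 0)) *\<^sub>R (Li *v lb i))" for t
  have LiL: "Li ** L = mat 1"
    unfolding Li_def L_def lb_def by (rule matrix_inv_left'[OF A5a])
  have bijf: "bij f" using A1 unfolding smooth_invertible_def by blast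
  have pos: "pstar (uu j) s * (1 + a t j s) > 0 \<and>
     (1 - \<epsilon> t (uu j)) * pstar (uu j) s + \<epsilon> t (uu j) * \<delta> (uu j) s = pstar (uu j) s * (1 + a t j s)
     \<and> ln ((1 - \<epsilon> t (uu j)) * pstar (uu j) s + \<epsilon> t (uu j) * \<delta> (uu j) s)
        = lam (uu j) \<bullet> Q s + cc j + ln (1 + a t j s)" for t j s
  proof -
    have p: "pstar (uu j) s > 0" using A2 by blast
    have d: "\<delta> (uu j) s \<ge> 0" using delta_dens unfolding is_density_def by blast
    have e: "0 \<le> \<epsilon> t (uu j)" "\<epsilon> t (uu j) < 1" using eps_range by auto
    have r: "\<rho> j s \<ge> 0" unfolding \<rho>_def using p d by simp
    have a1: "1 + a t j s > 0" proof -
      have "\<epsilon> t (uu j) * \<rho> j s \<ge> 0" using e r by simp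
      thus ?thesis unfolding a_def using e by (simp add: algebra_simps)
    qed
    have eq: "(1 - \<epsilon> t (uu j)) * pstar (uu j) s + \<epsilon> t (uu j) * \<delta> (uu j) s = pstar (uu j) s * (1 + a t j s)"
      unfolding a_def \<rho>_def using p by (simp add: field_simps)
    have lnp: "ln (pstar (uu j) s) = lam (uu j) \<bullet> Q s + cc j"
      using A2[of "uu j" s] unfolding cc_def Q_def inner_vec_def by simp
    show ?thesis using p a1 eq lnp by (simp add: ln_mult)
  qed
  have key: "lb i \<bullet> Q s = wb t i \<bullet> h t (f s) + K t i - (ln (1 + a t i s) - ln (1 + a t 0 s))" for t i s
  proof -
    define x where "x = f s"
    have invx: "inv f x = s" unfolding x_def using bijf by (simp add: bij_is_inj)
    define D where "D = \<bar>det (matrix (frechet_derivative (inv f) (at x)))\<bar>"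
    define M where "M j = (1 - \<epsilon> t (uu j)) * pstar (uu j) s + \<epsilon> t (uu j) * \<delta> (uu j) s" for j
    define r where "r j = induced_density f (\<lambda>s. (1 - \<epsilon> t (uu j)) * pstar (uu j) s + \<epsilon> t (uu j) * \<delta> (uu j) s) x / (c t x * e t (uu j))" for j
    have rM: "r j = M j * D / (c t x * e t (uu j))" for j
      unfolding r_def M_def D_def induced_density_def invx by simp
    have rpos: "r j > 0" and lnr: "ln (r j) = w t (uu j) \<bullet> h t x" for j
      using A4[of t "uu j" x] unfolding r_def by auto
    have Mpos: "M j > 0" for j using pos[where s=s and t=t and j=j] unfolding M_def by simp
    have lnM: "ln (M j) = lam (uu j) \<bullet> Q s + cc j + ln (1 + a t j s)" for j
      using pos[where s=s and t=t and j=j] unfolding M_def by blast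
    have nz: "D \<noteq> 0" "c t x \<noteq> 0" "e t (uu j) \<noteq> 0" for j
      using rpos[of j] rM[of j] by auto
    have ratio: "r i / r 0 = (M i / M 0) * (e t (uu 0) / e t (uu i))"
      unfolding rM using nz Mpos[of 0] by (simp add: field_simps)
    have epos: "e t (uu 0) / e t (uu i) > 0"
    proof -
      have "e t (uu 0) / e t (uu i) = (r i / r 0) * (M 0 / M i)"
        using ratio Mpos[of i] Mpos[of 0] by (simp add: field_simps)
      thus ?thesis using rpos Mpos by simp
    qed
    have "wb t i \<bullet> h t x = ln (r i) - ln (r 0)"
      unfolding wb_def lnr by (simp add: inner_diff_left)
    also have "\<dots> = ln (r i / r 0)" using rpos[of i] rpos[of 0] by (simp add: ln_div)
    also have "\<dots> = ln (M i) - ln (M 0) + ln (e t (uu 0) / e t (uu i))"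
      proof -
      have "M i / M 0 > 0" using Mpos[of i] Mpos[of 0] by simp
      hence "ln ((M i / M 0) * (e t (uu 0) / e t (uu i))) = ln (M i / M 0) + ln (e t (uu 0) / e t (uu i))"
        using epos by (rule ln_mult_pos)
      moreover have "ln (M i / M 0) = ln (M i) - ln (M 0)" using Mpos[of i] Mpos[of 0] by (rule ln_divide_pos)
      ultimately show ?thesis unfolding ratio by simp
    qed
    finally show ?thesis unfolding lnM K_def lb_def x_def by (simp add: inner_diff_left)
  qed
  have Qeq: "Q s = A t *v h t (f s) + Li *v (\<Sum>i=1..m. K t i *\<^sub>R lb i)
     - (\<Sum>i=1..m. (ln (1 + a t i s) - ln (1 + a t 0 s)) *\<^sub>R (Li *v lb i))" for t s
  proof -
    have "L *v Q s = (\<Sum>i=1..m. (lb i \<bullet> Q s) *\<^sub>R lb i)"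
      unfolding L_def sum_mv outer_mv ..
    also have "\<dots> = (\<Sum>i=1..m. (wb t i \<bullet> h t (f s)) *\<^sub>R lb i) + (\<Sum>i=1..m. K t i *\<^sub>R lb i)
        - (\<Sum>i=1..m. (ln (1 + a t i s) - ln (1 + a t 0 s)) *\<^sub>R lb i)"
    proof -
      have "(\<Sum>i=1..m. (lb i \<bullet> Q s) *\<^sub>R lb i) = (\<Sum>i=1..m. (wb t i \<bullet> h t (f s)) *\<^sub>R lb i + K t i *\<^sub>R lb i
        - (ln (1 + a t i s) - ln (1 + a t 0 s)) *\<^sub>R lb i)"
        proof (rule sum.cong[OF refl])
          fix i show "(lb i \<bullet> Q s) *\<^sub>R lb i = (wb t i \<bullet> h t (f s)) *\<^sub>R lb i + K t i *\<^sub>R lb i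
            - (ln (1 + a t i s) - ln (1 + a t 0 s)) *\<^sub>R lb i"
            by (subst key[where t=t]) (simp add: algebra_simps)
        qed
      thus ?thesis by (simp only: sum.distrib sum_subtractf)
    qed
    also have "(\<Sum>i=1..m. (wb t i \<bullet> h t (f s)) *\<^sub>R lb i) = B t *v h t (f s)"
      unfolding B_def sum_mv outer_mv ..
    finally have "L *v Q s = B t *v h t (f s) + (\<Sum>i=1..m. K t i *\<^sub>R lb i)
        - (\<Sum>i=1..m. (ln (1 + a t i s) - ln (1 + a t 0 s)) *\<^sub>R lb i)" .
    hence "Li *v (L *v Q s) = Li *v (B t *v h t (f s)) + Li *v (\<Sum>i=1..m. K t i *\<^sub>R lb i)
        - Li *v (\<Sum>i=1..m. (ln (1 + a t i s) - ln (1 + a t 0 s)) *\<^sub>R lb i)"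
      by (simp add: matrix_vector_right_distrib matrix_vector_mult_diff_distrib)
    thus ?thesis unfolding matrix_vector_mul_assoc LiL matrix_vector_mul_lid mv_sum A_def .
  qed
  have resid: "Q s + (\<Sum>i=1..m. (\<epsilon> t (uu i) * \<rho> i s - \<epsilon> t (uu 0) * \<rho> 0 s) *\<^sub>R (Li *v lb i))
      - (A t *v h t (f s) + \<alpha> t) = (\<Sum>i=1..m. (\<phi> (a t 0 s) - \<phi> (a t i s)) *\<^sub>R (Li *v lb i))" for t s
  proof -
    have "Q s + (\<Sum>i=1..m. (\<epsilon> t (uu i) * \<rho> i s - \<epsilon> t (uu 0) * \<rho> 0 s) *\<^sub>R (Li *v lb i))
      - (A t *v h t (f s) + \<alpha> t) = (\<Sum>i=1..m. (\<epsilon> t (uu i) * \<rho> i s - \<epsilon> t (uu 0) * \<rho> 0 s) *\<^sub>R (Li *v lb i))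
       - (\<Sum>i=1..m. (ln (1 + a t i s) - ln (1 + a t 0 s)) *\<^sub>R (Li *v lb i))
       - (\<Sum>i=1..m. (\<epsilon> t (uu i) - \<epsilon> t (uu 0)) *\<^sub>R (Li *v lb i))"
      by (subst Qeq[where s=s and t=t]) (simp add: \<alpha>_def algebra_simps)
    also have "\<dots> = (\<Sum>i=1..m. ((\<epsilon> t (uu i) * \<rho> i s - \<epsilon> t (uu 0) * \<rho> 0 s)
        - (ln (1 + a t i s) - ln (1 + a t 0 s)) - (\<epsilon> t (uu i) - \<epsilon> t (uu 0))) *\<^sub>R (Li *v lb i))"
      by (simp add: scaleR_diff_left sum_subtractf)
    also have "\<dots> = (\<Sum>i=1..m. (\<phi> (a t 0 s) - \<phi> (a t i s)) *\<^sub>R (Li *v lb i))"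
      by (rule sum.cong) (auto simp: \<phi>_def a_def algebra_simps)
    finally show ?thesis .
  qed
  define EM where "EM t = Max ((\<lambda>i. \<epsilon> t (uu i)) ` {0..m})" for t
  have EMge: "\<epsilon> t (uu i) \<le> EM t" if "i \<le> m" for t i
    unfolding EM_def using that by (intro Max_ge) auto
  have phiO: "(\<lambda>t. \<phi> (a t i s)) \<in> O[F](\<lambda>t. (EM t)\<^sup>2)" if im: "i \<le> m" for i s
  proof -
    define C where "C = \<bar>\<rho> i s - 1\<bar> + 1"
    have C: "C > 0" unfolding C_def by simp
    have ev: "\<forall>\<^sub>F t in F. dist (\<epsilon> t (uu i)) 0 < 1 / (2 * C)"
      using eps_small[OF im] C unfolding tendsto_iff by simp
    have "\<forall>\<^sub>F t in F. norm (\<phi> (a t i s)) \<le> (2 * C\<^sup>2) * norm ((EM t)\<^sup>2)"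
      using ev
    proof eventually_elim
      case (elim t)
      have e0: "0 \<le> \<epsilon> t (uu i)" using eps_range by blast
      have ab: "\<bar>a t i s\<bar> \<le> \<epsilon> t (uu i) * C"
        unfolding a_def C_def using e0 by (simp add: abs_mult mult_left_mono)
      have "\<epsilon> t (uu i) * C \<le> 1/2" using elim C e0
        by (simp add: field_simps)
      hence "\<bar>a t i s\<bar> \<le> 1/2" using ab by linarith
      hence "\<bar>\<phi> (a t i s)\<bar> \<le> 2 * (a t i s)\<^sup>2" unfolding \<phi>_def by (rule phi_bound)
      also have "(a t i s)\<^sup>2 \<le> (\<epsilon> t (uu i) * C)\<^sup>2"
        using ab by (metis abs_ge_zero power2_abs power_mono)
      also have "\<dots> \<le> (EM t * C)\<^sup>2"
        using EMge[OF im, of t] e0 C by (intro power_mono mult_right_mono) auto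
      finally show ?case by (simp add: power_mult_distrib mult_ac)
    qed
    thus ?thesis by (rule bigoI)
  qed
  show ?thesis
  proof (intro exI[of _ A] exI[of _ \<alpha>] conjI allI)
    fix t
    have "invertible (transpose (\<Sum>i=1..m. outer (w t (uu i) - w t (uu 0)) (lam (uu i) - lam (uu 0))))"
      by (rule transpose_invertible[OF A5b])
    also have "transpose (\<Sum>i=1..m. outer (w t (uu i) - w t (uu 0)) (lam (uu i) - lam (uu 0))) = B t"
      unfolding B_def lb_def wb_def by (simp add: transpose_sum' outer_transpose)
    finally have iB: "invertible (B t)" .
    have iLi: "invertible Li" unfolding invertible_def using LiL A5a
      by (metis L_def lb_def invertible_def matrix_inv_left' matrix_left_right_inverse)
    show "invertible (A t)" unfolding A_def by (rule invertible_mult[OF iLi iB])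
  next
    fix s :: "real^'d" and j :: 'd
    have termO: "(\<lambda>t. (\<phi> (a t 0 s) - \<phi> (a t i s)) * (Li *v lb i) $ j) \<in> O[F](\<lambda>t. (EM t)\<^sup>2)"
      if im: "i \<le> m" for i
    proof -
      have "(\<lambda>t. \<phi> (a t 0 s) - \<phi> (a t i s)) \<in> O[F](\<lambda>t. (EM t)\<^sup>2)"
        by (rule sum_in_bigo(2)[OF phiO phiO]) (use im in auto)
      thus ?thesis by (cases "(Li *v lb i) $ j = 0") auto
    qed
    have "(\<lambda>t. \<Sum>i\<in>{1..m}. (\<phi> (a t 0 s) - \<phi> (a t i s)) * (Li *v lb i) $ j) \<in> O[F](\<lambda>t. (EM t)\<^sup>2)"
      by (rule big_sum_in_bigo) (use termO in auto)
    hence "(\<lambda>t. (\<Sum>i=1..m. (\<phi> (a t 0 s) - \<phi> (a t i s)) *\<^sub>R (Li *v lb i)) $ j) \<in> O[F](\<lambda>t. (EM t)\<^sup>2)"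
      by (simp add: sum_component)
    hence "(\<lambda>t. (Q s + (\<Sum>i=1..m. (\<epsilon> t (uu i) * \<rho> i s - \<epsilon> t (uu 0) * \<rho> 0 s) *\<^sub>R (Li *v lb i))
      - (A t *v h t (f s) + \<alpha> t)) $ j) \<in> O[F](\<lambda>t. (EM t)\<^sup>2)"
      unfolding resid .
    thus "(\<lambda>t. ((\<chi> k. q k (s $ k))
                       + (\<Sum>i=1..m.
                           (\<epsilon> t (uu i) * (\<delta> (uu i) s / pstar (uu i) s)
                            - \<epsilon> t (uu 0) * (\<delta> (uu 0) s / pstar (uu 0) s))
                           *\<^sub>R (matrix_inv (\<Sum>l=1..m. outer (lam (uu l) - lam (uu 0))
                                                       (lam (uu l) - lam (uu 0)))
                                 *v (lam (uu i) - lam (uu 0))))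
                       - (A t *v h t (f s) + \<alpha> t)) $ j)
                 \<in> O[F](\<lambda>t. (Max ((\<lambda>i. \<epsilon> t (uu i)) ` {0..m}))\<^sup>2)"
      unfolding Q_def \<rho>_def Li_def L_def lb_def EM_def .
  qed
qed

end
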